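(* Let $H$ be a self-adjoint complex $2\times2$ matrix and let $L_1,L_2,L_3$ be self-adjoint complex $2\times 2$ matrices, $L_j=\begin{pmatrix} l^{00}_j & l^{01}_j\\ \overline{l^{01}_j} & l^{11}_j\end{pmatrix}$ with $l^{00}_j,l^{11}_j\in\mathbb{R}$, $l^{01}_j\in\mathbb{C}$. Define the vectors $L^0,L^1,L^\delta,L^R,L^I\in\mathbb{R}^3$ by their coordinates $L^0_j=l^{00}_j$, $L^1_j=l^{11}_j$, $L^\delta_j=(l^{11}_j-l^{00}_j)/2$, $L^R_j=\mathrm{Re}\,l^{01}_j$, $L^I_j=\mathrm{Im}\,l^{01}_j$, $j=1,2,3$. Consider the stochastic differential equation for a complex process $w$, with $W=(1,w)$, \[ dw=i[w(HW)_0-(HW)_1]\,dt+\frac12\sum_{j=1}^3[w(L_j^*L_jW)_0-(L_j^*L_jW)_1]\,dt+\sum_{j=1}^3[w(L_jW)_0^2-(L_jW)_0(L_jW)_1]\,dt+\sum_{j=1}^3[(L_jW)_1-w(L_jW)_0]\,dY^j_t, \] where $Y=(Y^1,Y^2,Y^3)$ is a standard three-dimensional Wiener process, and its diffusion operator (generator) acting on functions $S(x,y)$, $w=x+iy$. (i) The second order part of this diffusion operator is isothermic, i.e. has the form $\omega(x,y)\big(\frac{\partial^2S}{\partial x^2}+\frac{\partial^2S}{\partial y^2}\big)$ with some positive function $\omega$, if and only if the vectors $L^\delta,L^R,L^I$ form an orthonormal basis of $\mathbb{R}^3$ up to a common constant multiplier. In this case the second order part coincides, up to a constant multiplier, with $(1+x^2+y^2)^2\big(\frac{\partial^2S}{\partial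 x^2}+\frac{\partial^2S}{\partial y^2}\big)$ (the Laplace–Beltrami operator of the sphere in stereographic coordinates). (ii) For $H=0$, the whole diffusion operator is isothermic (i.e. of the form in (i) with all first order terms vanishing) if and only if $L^\delta,L^R,L^I$ form an orthonormal basis of $\mathbb{R}^3$ up to a common constant multiplier and $L^0=-L^1$. Moreover, under these conditions this diffusion operator coincides with the diffusion operator of the same equation rewritten in terms of the innovation process $dB^j_t=dY^j_t-\langle L_j+L_j^*\rangle_W\,dt$ (with $B$ treated as a standard three-dimensional Wiener process).
   Context: For a vector $v\in\mathbb{C}^2$, $(v)_0,(v)_1$ denote its two coordinates; for a matrix $A$, $\langle A\rangle_W=(W,AW)/(W,W)$ with the standard Hermitian inner product. This SDE is the quantum filtering (Belavkin) equation for a qubit with Hamiltonian $H$ and coupling operators $L_j$, written in the projective coordinate $w=\chi_1/\chi_0$. *)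

theory Defs
  imports "HOL-Analysis.Analysis"
begin

type_synonym cmat2 = "complex^2^2"

definition cadj :: "cmat2 \<Rightarrow> cmat2" where
  "cadj A = (\<chi> i j. cnj (A $ j $ i))"

definition selfadjoint2 :: "cmat2 \<Rightarrow> bool" where
  "selfadjoint2 A \<longleftrightarrow> cadj A = A"

definition Wv :: "complex \<Rightarrow> complex^2" where
  "Wv w = (\<chi> i. if i = 0 then 1 else w)"

definition cinner2 :: "complex^2 \<Rightarrow> complex^2 \<Rightarrow> complex" where
  "cinner2 u v = (\<Sum>i\<in>UNIV. cnj (u $ i) * v $ i)"

definition expval :: "cmat2 \<Rightarrow> complex^2 \<Rightarrow> complex" where
  "expval A W = cinner2 W (A *v W) / cinner2 W W"

definition sde_drift :: "cmat2 \<Rightarrow> (3 \<Rightarrow> cmat2) \<Rightarrow> complex \<Rightarrow> complex" where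
  "sde_drift H L w =
     \<i> * (w * (H *v Wv w) $ 0 - (H *v Wv w) $ 1)
   + (1/2) * (\<Sum>j\<in>UNIV. w * ((cadj (L j) ** L j) *v Wv w) $ 0 - ((cadj (L j) ** L j) *v Wv w) $ 1)
   + (\<Sum>j\<in>UNIV. w * ((L j *v Wv w) $ 0)^2 - (L j *v Wv w) $ 0 * (L j *v Wv w) $ 1)"

definition sde_diff :: "(3 \<Rightarrow> cmat2) \<Rightarrow> 3 \<Rightarrow> complex \<Rightarrow> complex" where
  "sde_diff L j w = (L j *v Wv w) $ 1 - w * (L j *v Wv w) $ 0"

text \<open>Drift of the same equation rewritten via the innovation process
  dB^j = dY^j - <L_j + L_j^*>_W dt, i.e. dY^j = dB^j + <L_j + L_j^*>_W dt.\<close>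
definition innov_drift :: "cmat2 \<Rightarrow> (3 \<Rightarrow> cmat2) \<Rightarrow> complex \<Rightarrow> complex" where
  "innov_drift H L w = sde_drift H L w
     + (\<Sum>j\<in>UNIV. sde_diff L j w * expval (L j + cadj (L j)) (Wv w))"

definition px :: "(real \<Rightarrow> real \<Rightarrow> real) \<Rightarrow> real \<Rightarrow> real \<Rightarrow> real" where
  "px S x y = deriv (\<lambda>t. S t y) x"

definition py :: "(real \<Rightarrow> real \<Rightarrow> real) \<Rightarrow> real \<Rightarrow> real \<Rightarrow> real" where
  "py S x y = deriv (\<lambda>t. S x t) y"

text \<open>Diffusion operator (generator) of dw = b dt + sum_j s_j dY^j, w = x + i y,
  acting on S(x,y).\<close>
definition diff_op :: "(complex \<Rightarrow> complex) \<Rightarrow> (3 \<Rightarrow> complex \<Rightarrow> complex)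
     \<Rightarrow> (real \<Rightarrow> real \<Rightarrow> real) \<Rightarrow> real \<Rightarrow> real \<Rightarrow> real" where
  "diff_op b s S x y =
     (let w = Complex x y in
        Re (b w) * px S x y + Im (b w) * py S x y
      + (1/2) * (\<Sum>j\<in>UNIV. (Re (s j w))^2 * px (px S) x y
                          + 2 * Re (s j w) * Im (s j w) * px (py S) x y
                          + (Im (s j w))^2 * py (py S) x y))"

definition isothermic :: "((real \<Rightarrow> real \<Rightarrow> real) \<Rightarrow> real \<Rightarrow> real \<Rightarrow> real) \<Rightarrow> bool" where
  "isothermic Op \<longleftrightarrow> (\<exists>\<omega>::real \<Rightarrow> real \<Rightarrow> real. (\<forall>x y. \<omega> x y > 0) \<and>
      (\<forall>S x y. Op S x y = \<omega> x y * (px (px S) x y + py (py S) x y)))"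

definition L0v :: "(3 \<Rightarrow> cmat2) \<Rightarrow> real^3" where
  "L0v L = (\<chi> j. Re (L j $ 0 $ 0))"
definition L1v :: "(3 \<Rightarrow> cmat2) \<Rightarrow> real^3" where
  "L1v L = (\<chi> j. Re (L j $ 1 $ 1))"
definition Ldeltav :: "(3 \<Rightarrow> cmat2) \<Rightarrow> real^3" where
  "Ldeltav L = (\<chi> j. (Re (L j $ 1 $ 1) - Re (L j $ 0 $ 0)) / 2)"
definition LRv :: "(3 \<Rightarrow> cmat2) \<Rightarrow> real^3" where
  "LRv L = (\<chi> j. Re (L j $ 0 $ 1))"
definition LIv :: "(3 \<Rightarrow> cmat2) \<Rightarrow> real^3" where
  "LIv L = (\<chi> j. Im (L j $ 0 $ 1))"

definition orthonormal_basis3 :: "real^3 \<Rightarrow> real^3 \<Rightarrow> real^3 \<Rightarrow> bool" where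
  "orthonormal_basis3 u v w \<longleftrightarrow>
     norm u = 1 \<and> norm v = 1 \<and> norm w = 1 \<and>
     inner u v = 0 \<and> inner u w = 0 \<and> inner v w = 0 \<and> span {u, v, w} = UNIV"

definition onb_up_to_const :: "real^3 \<Rightarrow> real^3 \<Rightarrow> real^3 \<Rightarrow> bool" where
  "onb_up_to_const u v w \<longleftrightarrow>
     (\<exists>c::real. c \<noteq> 0 \<and> orthonormal_basis3 (c *\<^sub>R u) (c *\<^sub>R v) (c *\<^sub>R w))"

end

theory Submission
  imports Defs
begin


lemma two_eq_zero2: "(2::2) = 0" by simp

lemma mv2: "(A *v v) $ i = A $ i $ 0 * v $ 0 + A $ i $ 1 * v $ (1::2)"
  by (simp add: matrix_vector_mult_def sum_2 two_eq_zero2 add.commute)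

lemma mm2: "(A ** B) $ i $ j = A $ i $ 0 * B $ 0 $ j + A $ i $ 1 * B $ (1::2) $ j"
  by (simp add: matrix_matrix_mult_def sum_2 two_eq_zero2 add.commute)

lemma Wv0: "Wv w $ 0 = 1" and Wv1: "Wv w $ 1 = w"
  by (simp_all add: Wv_def)

definition muv :: "(3 \<Rightarrow> cmat2) \<Rightarrow> real^3" where
  "muv L = (\<chi> j. (Re (L j $ 1 $ 1) + Re (L j $ 0 $ 0)) / 2)"

lemma ent:
  assumes "\<And>j. selfadjoint2 (L j)"
  shows "L j $ 0 $ 0 = of_real (muv L $ j - Ldeltav L $ j)"
    "L j $ 1 $ 1 = of_real (muv L $ j + Ldeltav L $ j)"
    "L j $ 0 $ 1 = of_real (LRv L $ j) + \<i> * of_real (LIv L $ j)"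
    "L j $ 1 $ 0 = of_real (LRv L $ j) - \<i> * of_real (LIv L $ j)"
proof -
  have c: "cadj (L j) = L j" using assms[of j] by (simp add: selfadjoint2_def)
  have e0: "cadj (L j) $ i $ k = cnj (L j $ k $ i)" for i k by (simp add: cadj_def)
  have e: "\<And>i k. L j $ i $ k = cnj (L j $ k $ i)" using e0 unfolding c .
  show "L j $ 0 $ 0 = of_real (muv L $ j - Ldeltav L $ j)"
    using e[of 0 0] by (simp add: complex_eq_iff muv_def Ldeltav_def field_simps)
  show "L j $ 1 $ 1 = of_real (muv L $ j + Ldeltav L $ j)"
    using e[of 1 1] by (simp add: complex_eq_iff muv_def Ldeltav_def field_simps)
  show "L j $ 0 $ 1 = of_real (LRv L $ j) + \<i> * of_real (LIv L $ j)"
    by (simp add: complex_eq_iff LRv_def LIv_def)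
  show "L j $ 1 $ 0 = of_real (LRv L $ j) - \<i> * of_real (LIv L $ j)"
    using e[of 1 0] by (simp add: complex_eq_iff LRv_def LIv_def)
qed

lemma sde_diff_vec:
  assumes "\<And>j. selfadjoint2 (L j)"
  shows "sde_diff L j w = of_real (LRv L $ j) * (1 - w^2) + of_real (LIv L $ j) * (- \<i> * (1 + w^2))
     + of_real (Ldeltav L $ j) * (2 * w)"
proof -
  define m where "m = complex_of_real (muv L $ j)"
  define dl where "dl = complex_of_real (Ldeltav L $ j)"
  define r where "r = complex_of_real (LRv L $ j)"
  define ii where "ii = complex_of_real (LIv L $ j)"
  have e: "L j $ 0 $ 0 = m - dl" "L j $ 1 $ 1 = m + dl" "L j $ 0 $ 1 = r + \<i> * ii" "L j $ 1 $ 0 = r - \<i> * ii"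
    using ent[where L=L, OF assms] by (simp_all add: m_def dl_def r_def ii_def)
  have "sde_diff L j w = (r - \<i> * ii) * 1 + (m + dl) * w - w * ((m - dl) * 1 + (r + \<i> * ii) * w)"
    unfolding sde_diff_def mv2 Wv0 Wv1 e ..
  also have "\<dots> = r * (1 - w^2) + ii * (- \<i> * (1 + w^2)) + dl * (2 * w)"
    by (simp add: algebra_simps power2_eq_square)
  finally show ?thesis by (simp add: r_def ii_def dl_def)
qed

lemma drift_alg:
  fixes m dl b cb w :: complex
  shows "w * ((m - dl) * (m - dl) * 1 + b * cb * 1 + ((m - dl) * b * w + b * (m + dl) * w))
     - (cb * (m - dl) * 1 + (m + dl) * cb * 1 + (cb * b * w + (m + dl) * (m + dl) * w))
     + 2 * (w * ((m - dl) * 1 + b * w)^2 - ((m - dl) * 1 + b * w) * (cb * 1 + (m + dl) * w))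
   = - 2 * ((cb + 2 * dl * w - b * w^2) * (2 * m - dl + b * w))"
  by algebra

lemma drift_vec:
  assumes "\<And>j. selfadjoint2 (L j)"
  shows "w * ((cadj (L j) ** L j) *v Wv w) $ 0 - ((cadj (L j) ** L j) *v Wv w) $ 1
      + 2 * (w * ((L j *v Wv w) $ 0)^2 - (L j *v Wv w) $ 0 * (L j *v Wv w) $ 1)
     = - 2 * ((of_real (LRv L $ j) * (1 - w^2) + of_real (LIv L $ j) * (- \<i> * (1 + w^2))
     + of_real (Ldeltav L $ j) * (2 * w)) * (of_real (LRv L $ j) * w + of_real (LIv L $ j) * (\<i> * w)
     + of_real (Ldeltav L $ j) * (-1) + of_real (muv L $ j) * 2))"
proof -
  have c: "cadj (L j) = L j" using assms[of j] by (simp add: selfadjoint2_def)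
  define m where "m = complex_of_real (muv L $ j)"
  define dl where "dl = complex_of_real (Ldeltav L $ j)"
  define b where "b = L j $ 0 $ 1"
  define cb where "cb = L j $ 1 $ 0"
  have e: "L j $ 0 $ 0 = m - dl" "L j $ 1 $ 1 = m + dl" "L j $ 0 $ 1 = b" "L j $ 1 $ 0 = cb"
    using ent[where L=L, OF assms] by (simp_all add: m_def dl_def b_def cb_def)
  have 1: "cb + 2 * dl * w - b * w^2 = (of_real (LRv L $ j) * (1 - w^2) + of_real (LIv L $ j) * (- \<i> * (1 + w^2))
     + of_real (Ldeltav L $ j) * (2 * w))"
    using ent[where L=L, OF assms] unfolding b_def cb_def dl_def by (simp add: algebra_simps)
  have 2: "2 * m - dl + b * w = (of_real (LRv L $ j) * w + of_real (LIv L $ j) * (\<i> * w)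
     + of_real (Ldeltav L $ j) * (-1) + of_real (muv L $ j) * 2)"
    using ent[where L=L, OF assms] unfolding b_def m_def dl_def by (simp add: algebra_simps)
  show ?thesis
    unfolding c mv2 mm2 Wv0 Wv1 e 1[symmetric] 2[symmetric] by algebra
qed

lemma bilin:
  fixes u v z m :: "real^3" and p1 p2 p3 q1 q2 q3 q4 :: complex
  shows "(\<Sum>j\<in>UNIV. (of_real (u$j) * p1 + of_real (v$j) * p2 + of_real (z$j) * p3) *
      (of_real (u$j) * q1 + of_real (v$j) * q2 + of_real (z$j) * q3 + of_real (m$j) * q4))
   = of_real (inner u u) * p1 * q1 + of_real (inner u v) * p1 * q2 + of_real (inner u z) * p1 * q3
     + of_real (inner u m) * p1 * q4
     + of_real (inner u v) * p2 * q1 + of_real (inner v v) * p2 * q2 + of_real (inner v z) * p2 * q3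
     + of_real (inner v m) * p2 * q4
     + of_real (inner u z) * p3 * q1 + of_real (inner v z) * p3 * q2 + of_real (inner z z) * p3 * q3
     + of_real (inner z m) * p3 * q4" (is "?l = ?r")
proof -
  have pt: "\<And>u v :: real^3. \<And>p q :: complex. (\<Sum>j\<in>UNIV. (of_real (u$j) * p) * (of_real (v$j) * q)) = of_real (inner u v) * p * q"
    unfolding inner_vec_def by (simp add: sum_distrib_left sum_distrib_right mult_ac)
  show ?thesis
    apply (simp only: distrib_left distrib_right sum.distrib pt)
    apply (simp add: inner_commute)
    done
qed



definition vRe :: "(3 \<Rightarrow> cmat2) \<Rightarrow> real \<Rightarrow> real \<Rightarrow> real^3" where
  "vRe L x y = (1 - x^2 + y^2) *\<^sub>R LRv L + (2*x*y) *\<^sub>R LIv L + (2*x) *\<^sub>R Ldeltav L"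
definition vIm :: "(3 \<Rightarrow> cmat2) \<Rightarrow> real \<Rightarrow> real \<Rightarrow> real^3" where
  "vIm L x y = (-(2*x*y)) *\<^sub>R LRv L + (-(1 + x^2 - y^2)) *\<^sub>R LIv L + (2*y) *\<^sub>R Ldeltav L"

lemma Re_sde:
  assumes "\<And>j. selfadjoint2 (L j)"
  shows "Re (sde_diff L j (Complex x y)) = vRe L x y $ j"
    "Im (sde_diff L j (Complex x y)) = vIm L x y $ j"
  unfolding sde_diff_vec[OF assms] vRe_def vIm_def
  by (simp_all add: power2_eq_square algebra_simps)

lemma px_eq: "(\<And>x y. ((\<lambda>t. S t y) has_real_derivative D x y) (at x)) \<Longrightarrow> px S = D"
  by (intro ext) (simp add: px_def DERIV_imp_deriv)
lemma py_eq: "(\<And>x y. ((\<lambda>t. S x t) has_real_derivative D x y) (at y)) \<Longrightarrow> py S = D"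
  by (intro ext) (simp add: py_def DERIV_imp_deriv)

lemma pconst: "px (\<lambda>x y. c) = (\<lambda>x y. 0)" "py (\<lambda>x y. c) = (\<lambda>x y. 0)"
  by (rule px_eq py_eq; auto intro!: derivative_eq_intros)+
lemma pX: "px (\<lambda>x y. x) = (\<lambda>x y. 1)" "py (\<lambda>x y. x) = (\<lambda>x y. 0)"
  by (rule px_eq py_eq; auto intro!: derivative_eq_intros)+
lemma pY: "px (\<lambda>x y. y) = (\<lambda>x y. 0)" "py (\<lambda>x y. y) = (\<lambda>x y. 1)"
  by (rule px_eq py_eq; auto intro!: derivative_eq_intros)+
lemma pXX: "px (\<lambda>x y. x^2) = (\<lambda>x y. 2 * x)" "py (\<lambda>x y. x^2) = (\<lambda>x y. 0)"
  by (rule px_eq py_eq; auto intro!: derivative_eq_intros)+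
lemma pYY: "px (\<lambda>x y. y^2) = (\<lambda>x y. 0)" "py (\<lambda>x y. y^2) = (\<lambda>x y. 2 * y)"
  by (rule px_eq py_eq; auto intro!: derivative_eq_intros)+
lemma pXY: "px (\<lambda>x y. x * y) = (\<lambda>x y. y)" "py (\<lambda>x y. x * y) = (\<lambda>x y. x)"
  by (rule px_eq py_eq; auto intro!: derivative_eq_intros)+
lemma p2X: "px (\<lambda>x y. 2 * x) = (\<lambda>x y. 2)" "py (\<lambda>x y. 2 * x) = (\<lambda>x y. 0)"
  by (rule px_eq py_eq; auto intro!: derivative_eq_intros)+
lemma p2Y: "px (\<lambda>x y. 2 * y) = (\<lambda>x y. 0)" "py (\<lambda>x y. 2 * y) = (\<lambda>x y. 2)"
  by (rule px_eq py_eq; auto intro!: derivative_eq_intros)+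

definition cA :: "(3 \<Rightarrow> complex \<Rightarrow> complex) \<Rightarrow> real \<Rightarrow> real \<Rightarrow> real" where
  "cA s x y = (\<Sum>j\<in>UNIV. (Re (s j (Complex x y)))^2)"
definition cB :: "(3 \<Rightarrow> complex \<Rightarrow> complex) \<Rightarrow> real \<Rightarrow> real \<Rightarrow> real" where
  "cB s x y = (\<Sum>j\<in>UNIV. Re (s j (Complex x y)) * Im (s j (Complex x y)))"
definition cC :: "(3 \<Rightarrow> complex \<Rightarrow> complex) \<Rightarrow> real \<Rightarrow> real \<Rightarrow> real" where
  "cC s x y = (\<Sum>j\<in>UNIV. (Im (s j (Complex x y)))^2)"

lemma diff_op_exp:
  "diff_op b s S x y = Re (b (Complex x y)) * px S x y + Im (b (Complex x y)) * py S x y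
     + (cA s x y / 2) * px (px S) x y + cB s x y * px (py S) x y + (cC s x y / 2) * py (py S) x y"
proof -
  have "(\<Sum>j\<in>UNIV. (Re (s j (Complex x y)))^2 * px (px S) x y
                          + 2 * Re (s j (Complex x y)) * Im (s j (Complex x y)) * px (py S) x y
                          + (Im (s j (Complex x y)))^2 * py (py S) x y)
     = cA s x y * px (px S) x y + 2 * cB s x y * px (py S) x y + cC s x y * py (py S) x y"
    unfolding cA_def cB_def cC_def
    by (simp add: sum.distrib sum_distrib_left sum_distrib_right mult_ac)
  then show ?thesis unfolding diff_op_def Let_def by simp
qed

lemma iso_char:
  "isothermic (diff_op b s) \<longleftrightarrow>
    (\<forall>x y. b (Complex x y) = 0 \<and> cB s x y = 0 \<and> cA s x y = cC s x y \<and> cA s x y > 0)"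
proof
  assume "isothermic (diff_op b s)"
  then obtain \<omega> where pos: "\<And>x y. \<omega> x y > 0"
    and eq: "\<And>S x y. diff_op b s S x y = \<omega> x y * (px (px S) x y + py (py S) x y)"
    unfolding isothermic_def by blast
  show "\<forall>x y. b (Complex x y) = 0 \<and> cB s x y = 0 \<and> cA s x y = cC s x y \<and> cA s x y > 0"
  proof (intro allI)
    fix x y
    have h1: "Re (b (Complex x y)) = 0"
      using eq[of "\<lambda>x y. x" x y] by (simp add: diff_op_exp pX pconst)
    have h2: "Im (b (Complex x y)) = 0"
      using eq[of "\<lambda>x y. y" x y] by (simp add: diff_op_exp pY pconst)
    have h3: "cA s x y = 2 * \<omega> x y"
      using eq[of "\<lambda>x y. x^2" x y] h1 h2 by (simp add: diff_op_exp pXX p2X pconst)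
    have h4: "cC s x y = 2 * \<omega> x y"
      using eq[of "\<lambda>x y. y^2" x y] h1 h2 by (simp add: diff_op_exp pYY p2Y pconst)
    have h5: "cB s x y = 0"
      using eq[of "\<lambda>x y. x * y" x y] h1 h2 by (simp add: diff_op_exp pXY pX pY pconst)
    show "b (Complex x y) = 0 \<and> cB s x y = 0 \<and> cA s x y = cC s x y \<and> cA s x y > 0"
      using h1 h2 h3 h4 h5 pos[of x y] by (simp add: complex_eq_iff)
  qed
next
  assume h: "\<forall>x y. b (Complex x y) = 0 \<and> cB s x y = 0 \<and> cA s x y = cC s x y \<and> cA s x y > 0"
  show "isothermic (diff_op b s)"
    unfolding isothermic_def
  proof (intro exI[of _ "\<lambda>x y. cA s x y / 2"] conjI allI)
    fix x y show "cA s x y / 2 > 0" using h[rule_format, of x y] by simp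
  next
    fix S x y
    show "diff_op b s S x y = cA s x y / 2 * (px (px S) x y + py (py S) x y)"
      using h unfolding diff_op_exp by (simp add: algebra_simps)
  qed
qed



lemma span3:
  fixes u v w :: "real^3"
  assumes "inner u v = 0" "inner u w = 0" "inner v w = 0" "u \<noteq> 0" "v \<noteq> 0" "w \<noteq> 0"
  shows "span {u, v, w} = UNIV"
proof -
  have d: "u \<noteq> v" "u \<noteq> w" "v \<noteq> w" using assms by auto
  have po: "pairwise orthogonal {u, v, w}"
    using assms by (auto simp: pairwise_def orthogonal_def inner_commute)
  have ind: "independent {u, v, w}"
    by (rule pairwise_orthogonal_independent[OF po]) (use assms in auto)
  have c: "card {u, v, w} = dim (UNIV :: (real^3) set)"
    using d by simp
  have "(UNIV :: (real^3) set) \<subseteq> span {u, v, w}"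
    using card_eq_dim[of "{u, v, w}" UNIV] c ind by simp
  then show ?thesis by auto
qed

definition gram :: "(3 \<Rightarrow> cmat2) \<Rightarrow> bool" where
  "gram L \<longleftrightarrow> inner (Ldeltav L) (LRv L) = 0 \<and> inner (Ldeltav L) (LIv L) = 0 \<and> inner (LRv L) (LIv L) = 0
    \<and> inner (LRv L) (LRv L) = inner (Ldeltav L) (Ldeltav L)
    \<and> inner (LIv L) (LIv L) = inner (Ldeltav L) (Ldeltav L) \<and> inner (Ldeltav L) (Ldeltav L) > 0"

lemma onb_iff:
  fixes d r i :: "real^3"
  shows "onb_up_to_const d r i \<longleftrightarrow> (inner d r = 0 \<and> inner d i = 0 \<and> inner r i = 0
    \<and> inner r r = inner d d \<and> inner i i = inner d d \<and> inner d d > 0)"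
proof
  assume "onb_up_to_const d r i"
  then obtain c where c: "c \<noteq> 0" and o: "orthonormal_basis3 (c *\<^sub>R d) (c *\<^sub>R r) (c *\<^sub>R i)"
    unfolding onb_up_to_const_def by blast
  have n: "inner (c *\<^sub>R d) (c *\<^sub>R d) = 1" "inner (c *\<^sub>R r) (c *\<^sub>R r) = 1" "inner (c *\<^sub>R i) (c *\<^sub>R i) = 1"
  proof -
    have n0: "norm (c *\<^sub>R d) = 1" "norm (c *\<^sub>R r) = 1" "norm (c *\<^sub>R i) = 1"
      using o unfolding orthonormal_basis3_def by blast+
    then show "inner (c *\<^sub>R d) (c *\<^sub>R d) = 1" "inner (c *\<^sub>R r) (c *\<^sub>R r) = 1" "inner (c *\<^sub>R i) (c *\<^sub>R i) = 1"
      using norm_eq_1 by blast+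
  qed
  have z: "inner (c *\<^sub>R d) (c *\<^sub>R r) = 0" "inner (c *\<^sub>R d) (c *\<^sub>R i) = 0" "inner (c *\<^sub>R r) (c *\<^sub>R i) = 0"
    using o unfolding orthonormal_basis3_def by blast+
  have cc: "c * c > 0" using c by (auto simp add: zero_less_mult_iff linorder_neq_iff)
  have n': "c * c * inner d d = 1" "c * c * inner r r = 1" "c * c * inner i i = 1"
    using n by (simp_all add: mult.assoc)
  have z': "c * c * inner d r = 0" "c * c * inner d i = 0" "c * c * inner r i = 0"
    using z by (simp_all add: mult.assoc)
  have "inner d d > 0" using n'(1) cc
    by (metis inner_ge_zero less_eq_real_def mult_zero_right zero_neq_one)
  then show "inner d r = 0 \<and> inner d i = 0 \<and> inner r i = 0
    \<and> inner r r = inner d d \<and> inner i i = inner d d \<and> inner d d > 0"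
  proof -
    have ccn: "c * c \<noteq> 0" using c by simp
    have e1: "inner r r = inner d d" using n'(1) n'(2) mult_left_cancel[OF ccn] by metis
    have e2: "inner i i = inner d d" using n'(1) n'(3) mult_left_cancel[OF ccn] by metis
    have "inner d r = 0" "inner d i = 0" "inner r i = 0" using z' ccn by simp_all
    then show ?thesis using e1 e2 \<open>inner d d > 0\<close> by simp
  qed
next
  assume h: "inner d r = 0 \<and> inner d i = 0 \<and> inner r i = 0
    \<and> inner r r = inner d d \<and> inner i i = inner d d \<and> inner d d > 0"
  define c where "c = 1 / sqrt (inner d d)"
  have c0: "c \<noteq> 0" and cpos: "c > 0" using h by (simp_all add: c_def)
  have cc: "c * c * inner d d = 1" using h unfolding c_def
    by (simp add: real_sqrt_mult[symmetric])
  have nr: "norm (c *\<^sub>R x) = 1" if "inner x x = inner d d" for x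
  proof -
    have "inner (c *\<^sub>R x) (c *\<^sub>R x) = 1" using cc that by (simp add: mult.assoc)
    then show ?thesis using norm_eq_1 by blast
  qed
  have nz: "c *\<^sub>R d \<noteq> 0" "c *\<^sub>R r \<noteq> 0" "c *\<^sub>R i \<noteq> 0"
    using h c0 by auto
  have "orthonormal_basis3 (c *\<^sub>R d) (c *\<^sub>R r) (c *\<^sub>R i)"
    unfolding orthonormal_basis3_def
    using nr[of d] nr[of r] nr[of i] h span3[OF _ _ _ nz] by simp
  then show "onb_up_to_const d r i" unfolding onb_up_to_const_def using c0 by blast
qed



lemma cABC:
  assumes sa: "\<And>j. selfadjoint2 (L j)"
  shows "cA (sde_diff L) x y = inner (vRe L x y) (vRe L x y)"
    "cB (sde_diff L) x y = inner (vRe L x y) (vIm L x y)"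
    "cC (sde_diff L) x y = inner (vIm L x y) (vIm L x y)"
  unfolding cA_def cB_def cC_def Re_sde[OF sa] inner_vec_def by (simp_all add: power2_eq_square)

lemma so_gram1:
  assumes "gram L"
  shows "inner (vRe L x y) (vRe L x y) = inner (Ldeltav L) (Ldeltav L) * (1 + x^2 + y^2)^2"
proof -
  define d where "d = Ldeltav L"
  define r where "r = LRv L"
  define i where "i = LIv L"
  have f: "inner d r = 0" "inner r d = 0" "inner d i = 0" "inner i d = 0" "inner r i = 0" "inner i r = 0"
     "inner r r = inner d d" "inner i i = inner d d"
    using assms unfolding gram_def d_def r_def i_def by (simp_all add: inner_commute)
  show ?thesis
    unfolding vRe_def d_def[symmetric] r_def[symmetric] i_def[symmetric]
    apply (simp add: inner_add_left inner_add_right inner_diff_left inner_diff_right f)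
    apply (simp add: algebra_simps power2_eq_square)
    done
qed

lemma so_gram2:
  assumes "gram L"
  shows "inner (vIm L x y) (vIm L x y) = inner (Ldeltav L) (Ldeltav L) * (1 + x^2 + y^2)^2"
proof -
  define d where "d = Ldeltav L"
  define r where "r = LRv L"
  define i where "i = LIv L"
  have f: "inner d r = 0" "inner r d = 0" "inner d i = 0" "inner i d = 0" "inner r i = 0" "inner i r = 0"
     "inner r r = inner d d" "inner i i = inner d d"
    using assms unfolding gram_def d_def r_def i_def by (simp_all add: inner_commute)
  show ?thesis
    unfolding vIm_def d_def[symmetric] r_def[symmetric] i_def[symmetric]
    apply (simp add: inner_add_left inner_add_right inner_diff_left inner_diff_right f)
    apply (simp add: algebra_simps power2_eq_square)
    done
qed

lemma so_gram3:
  assumes "gram L"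
  shows "inner (vRe L x y) (vIm L x y) = 0"
proof -
  define d where "d = Ldeltav L"
  define r where "r = LRv L"
  define i where "i = LIv L"
  have f: "inner d r = 0" "inner r d = 0" "inner d i = 0" "inner i d = 0" "inner r i = 0" "inner i r = 0"
     "inner r r = inner d d" "inner i i = inner d d"
    using assms unfolding gram_def d_def r_def i_def by (simp_all add: inner_commute)
  show ?thesis
    unfolding vRe_def vIm_def d_def[symmetric] r_def[symmetric] i_def[symmetric]
    apply (simp add: inner_add_left inner_add_right inner_diff_left inner_diff_right f)
    apply (simp add: algebra_simps power2_eq_square)
    done
qed

lemma pos_sq: "(0::real) < (1 + x^2 + y^2)^2"
proof -
  have "0 \<le> x^2" "0 \<le> y^2" by simp_all
  then have "(0::real) < 1 + x^2 + y^2" by linarith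
  then show ?thesis by simp
qed

lemma so_iff:
  assumes sa: "\<And>j. selfadjoint2 (L j)"
  shows "(\<forall>x y. cB (sde_diff L) x y = 0 \<and> cA (sde_diff L) x y = cC (sde_diff L) x y
      \<and> cA (sde_diff L) x y > 0) \<longleftrightarrow> gram L"
proof
  assume h: "\<forall>x y. cB (sde_diff L) x y = 0 \<and> cA (sde_diff L) x y = cC (sde_diff L) x y
      \<and> cA (sde_diff L) x y > 0"
  have v: "vRe L 0 0 = LRv L" "vIm L 0 0 = - LIv L" "vRe L 1 0 = 2 *\<^sub>R Ldeltav L"
     "vIm L 1 0 = - (2 *\<^sub>R LIv L)" "vRe L 0 1 = 2 *\<^sub>R LRv L" "vIm L 0 1 = 2 *\<^sub>R Ldeltav L"
    by (simp_all add: vRe_def vIm_def)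
  have a: "inner (vRe L 0 0) (vIm L 0 0) = 0" "inner (vRe L 0 0) (vRe L 0 0) = inner (vIm L 0 0) (vIm L 0 0)"
     "inner (vRe L 0 0) (vRe L 0 0) > 0"
    using h[rule_format, of 0 0] unfolding cABC[OF sa] by blast+
  have b: "inner (vRe L 1 0) (vIm L 1 0) = 0" "inner (vRe L 1 0) (vRe L 1 0) = inner (vIm L 1 0) (vIm L 1 0)"
    using h[rule_format, of 1 0] unfolding cABC[OF sa] by blast+
  have c: "inner (vRe L 0 1) (vIm L 0 1) = 0"
    using h[rule_format, of 0 1] unfolding cABC[OF sa] by blast+
  have g1: "inner (LRv L) (LIv L) = 0" using a(1) unfolding v by simp
  have g2: "inner (LRv L) (LRv L) = inner (LIv L) (LIv L)" using a(2) unfolding v by simp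
  have g3: "inner (LRv L) (LRv L) > 0" using a(3) unfolding v by simp
  have g4: "inner (Ldeltav L) (LIv L) = 0" using b(1) unfolding v by simp
  have g5: "inner (Ldeltav L) (Ldeltav L) = inner (LIv L) (LIv L)" using b(2) unfolding v by simp
  have g6: "inner (Ldeltav L) (LRv L) = 0" using c unfolding v by (simp add: inner_commute)
  show "gram L" unfolding gram_def
    using g1 g2 g3 g4 g5 g6 by simp
next
  assume g: "gram L"
  have p: "inner (Ldeltav L) (Ldeltav L) > 0" using g unfolding gram_def by simp
  have q: "\<And>x y. 0 < inner (Ldeltav L) (Ldeltav L) * (1 + x^2 + y^2)^2"
    using p pos_sq by (intro mult_pos_pos)
  show "\<forall>x y. cB (sde_diff L) x y = 0 \<and> cA (sde_diff L) x y = cC (sde_diff L) x y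
      \<and> cA (sde_diff L) x y > 0"
    using p q unfolding cABC[OF sa] so_gram1[OF g] so_gram2[OF g] so_gram3[OF g] by simp
qed



lemma sum_half:
  fixes X Y P :: "3 \<Rightarrow> complex"
  assumes "\<And>j. X j + 2 * Y j = - 2 * P j"
  shows "(1/2) * (\<Sum>j\<in>UNIV. X j) + (\<Sum>j\<in>UNIV. Y j) = - (\<Sum>j\<in>UNIV. P j)"
proof -
  have "X j = - 2 * P j - 2 * Y j" for j using assms[of j] by (simp add: algebra_simps)
  then have "(\<Sum>j\<in>UNIV. X j) = - 2 * (\<Sum>j\<in>UNIV. P j) - 2 * (\<Sum>j\<in>UNIV. Y j)"
    by (simp add: sum_subtractf sum_distrib_left)
  then show ?thesis by (simp add: field_simps)
qed

lemma drift_bilin: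
  assumes sa: "\<And>j. selfadjoint2 (L j)"
  shows "sde_drift 0 L w = - (\<Sum>j\<in>UNIV. (of_real (LRv L $ j) * (1 - w^2) + of_real (LIv L $ j) * (- \<i> * (1 + w^2))
     + of_real (Ldeltav L $ j) * (2 * w)) * (of_real (LRv L $ j) * w + of_real (LIv L $ j) * (\<i> * w)
     + of_real (Ldeltav L $ j) * (-1) + of_real (muv L $ j) * 2))"
proof -
  have z: "(0 *v Wv w) $ i = 0" for i by (simp add: mv2)
  show ?thesis unfolding sde_drift_def z
    by (simp only: mult_zero_right diff_zero add_0_left) (rule sum_half, rule drift_vec[OF sa])
qed

lemma drift_gram:
  assumes sa: "\<And>j. selfadjoint2 (L j)" and g: "gram L"
  shows "sde_drift 0 L w = - 2 * (of_real (inner (LRv L) (muv L)) * (1 - w^2)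
      + of_real (inner (LIv L) (muv L)) * (- \<i> * (1 + w^2)) + of_real (inner (Ldeltav L) (muv L)) * (2 * w))"
proof -
  have f: "inner (LRv L) (Ldeltav L) = 0" "inner (LIv L) (Ldeltav L) = 0" "inner (LRv L) (LIv L) = 0"
     "inner (LRv L) (LRv L) = inner (Ldeltav L) (Ldeltav L)" "inner (LIv L) (LIv L) = inner (Ldeltav L) (Ldeltav L)"
    using g unfolding gram_def by (simp_all add: inner_commute)
  have ii: "\<i> * \<i> = -1" by simp
  show ?thesis
    unfolding drift_bilin[OF sa] bilin f of_real_0
    using ii by algebra
qed

lemma drift_zero_iff:
  assumes sa: "\<And>j. selfadjoint2 (L j)" and g: "gram L"
  shows "(\<forall>w. sde_drift 0 L w = 0) \<longleftrightarrow> L0v L = - L1v L"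
proof -
  have mu: "L0v L = - L1v L \<longleftrightarrow> muv L = 0"
    by (simp add: vec_eq_iff muv_def L0v_def L1v_def eq_neg_iff_add_eq_0 add.commute)
  have gg: "inner (Ldeltav L) (LRv L) = 0" "inner (Ldeltav L) (LIv L) = 0" "inner (LRv L) (LIv L) = 0"
     "inner (LRv L) (LRv L) = inner (Ldeltav L) (Ldeltav L)" "inner (LIv L) (LIv L) = inner (Ldeltav L) (Ldeltav L)"
     "inner (Ldeltav L) (Ldeltav L) > 0"
    using g unfolding gram_def by simp_all
  have nz: "Ldeltav L \<noteq> 0" "LRv L \<noteq> 0" "LIv L \<noteq> 0" using gg by auto
  have sp: "span {Ldeltav L, LRv L, LIv L} = UNIV"
    by (rule span3[OF gg(1,2,3) nz])
  show ?thesis unfolding mu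
  proof
    assume h: "\<forall>w. sde_drift 0 L w = 0"
    have h0: "Re (sde_drift 0 L 0) = 0" "Im (sde_drift 0 L 0) = 0" using h by simp_all
    have a1: "inner (LRv L) (muv L) = 0" "inner (LIv L) (muv L) = 0"
      using h0 unfolding drift_gram[OF sa g] by simp_all
    have "of_real (inner (Ldeltav L) (muv L)) * 4 = (0::complex)"
      using h[rule_format, of 1] unfolding drift_gram[OF sa g] a1 by simp
    then have a2: "inner (Ldeltav L) (muv L) = 0" by simp
    have "orthogonal (muv L) (muv L)"
      by (rule orthogonal_to_span[of _ "{Ldeltav L, LRv L, LIv L}"])
         (use sp a1 a2 in \<open>auto simp: orthogonal_def inner_commute\<close>)
    then show "muv L = 0" by (simp add: orthogonal_def)
  next
    assume "muv L = 0"
    then show "\<forall>w. sde_drift 0 L w = 0" unfolding drift_gram[OF sa g] by simp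
  qed
qed



lemma mu_iff: "L0v L = - L1v L \<longleftrightarrow> muv L = 0"
  by (simp add: vec_eq_iff muv_def L0v_def L1v_def eq_neg_iff_add_eq_0 add.commute)

lemma expval_vec:
  assumes sa: "\<And>j. selfadjoint2 (L j)"
  shows "expval (L j + cadj (L j)) (Wv w) = 2 / (1 + cnj w * w) *
    (of_real (LRv L $ j) * (w + cnj w) + of_real (LIv L $ j) * (\<i> * (w - cnj w))
     + of_real (Ldeltav L $ j) * (cnj w * w - 1) + of_real (muv L $ j) * (1 + cnj w * w))"
proof -
  have c: "cadj (L j) = L j" using sa[of j] by (simp add: selfadjoint2_def)
  define m where "m = complex_of_real (muv L $ j)"
  define dl where "dl = complex_of_real (Ldeltav L $ j)"
  define r where "r = complex_of_real (LRv L $ j)"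
  define ii where "ii = complex_of_real (LIv L $ j)"
  have e: "L j $ 0 $ 0 = m - dl" "L j $ 1 $ 1 = m + dl" "L j $ 0 $ 1 = r + \<i> * ii" "L j $ 1 $ 0 = r - \<i> * ii"
    using ent[where L=L, OF sa] by (simp_all add: m_def dl_def r_def ii_def)
  have num: "cinner2 (Wv w) ((L j + L j) *v Wv w)
     = 2 * (r * (w + cnj w) + ii * (\<i> * (w - cnj w)) + dl * (cnj w * w - 1) + m * (1 + cnj w * w))"
    unfolding cinner2_def sum_2 two_eq_zero2 mv2 Wv0 Wv1
    by (simp add: e algebra_simps)
  have den: "cinner2 (Wv w) (Wv w) = 1 + cnj w * w"
    unfolding cinner2_def sum_2 two_eq_zero2 Wv0 Wv1 by simp
  show ?thesis unfolding expval_def c num den by (simp add: r_def ii_def dl_def m_def)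
qed

lemma innov_zero:
  assumes sa: "\<And>j. selfadjoint2 (L j)" and g: "gram L" and mu: "muv L = 0"
  shows "(\<Sum>j\<in>UNIV. sde_diff L j w * expval (L j + cadj (L j)) (Wv w)) = 0"
proof -
  define K where "K = 2 / (1 + cnj w * w)"
  have f: "inner (LRv L) (Ldeltav L) = 0" "inner (LIv L) (Ldeltav L) = 0" "inner (LRv L) (LIv L) = 0"
     "inner (LRv L) (LRv L) = inner (Ldeltav L) (Ldeltav L)" "inner (LIv L) (LIv L) = inner (Ldeltav L) (Ldeltav L)"
    using g unfolding gram_def by (simp_all add: inner_commute)
  have ii: "\<i> * \<i> = -1" by simp
  have "(\<Sum>j\<in>UNIV. sde_diff L j w * expval (L j + cadj (L j)) (Wv w))
     = (\<Sum>j\<in>UNIV. K * ((of_real (LRv L $ j) * (1 - w^2) + of_real (LIv L $ j) * (- \<i> * (1 + w^2))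
     + of_real (Ldeltav L $ j) * (2 * w)) * (of_real (LRv L $ j) * (w + cnj w) + of_real (LIv L $ j) * (\<i> * (w - cnj w))
     + of_real (Ldeltav L $ j) * (cnj w * w - 1) + of_real (muv L $ j) * (1 + cnj w * w))))"
    unfolding sde_diff_vec[where L=L, OF sa] expval_vec[where L=L, OF sa] K_def
    by (rule sum.cong[OF refl], rule mult.left_commute)
  also have "\<dots> = K * (\<Sum>j\<in>UNIV. (of_real (LRv L $ j) * (1 - w^2) + of_real (LIv L $ j) * (- \<i> * (1 + w^2))
     + of_real (Ldeltav L $ j) * (2 * w)) * (of_real (LRv L $ j) * (w + cnj w) + of_real (LIv L $ j) * (\<i> * (w - cnj w))
     + of_real (Ldeltav L $ j) * (cnj w * w - 1) + of_real (muv L $ j) * (1 + cnj w * w)))"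
    by (simp only: sum_distrib_left)
  also have "(\<Sum>j\<in>UNIV. (of_real (LRv L $ j) * (1 - w^2) + of_real (LIv L $ j) * (- \<i> * (1 + w^2))
     + of_real (Ldeltav L $ j) * (2 * w)) * (of_real (LRv L $ j) * (w + cnj w) + of_real (LIv L $ j) * (\<i> * (w - cnj w))
     + of_real (Ldeltav L $ j) * (cnj w * w - 1) + of_real (muv L $ j) * (1 + cnj w * w))) = 0"
    unfolding bilin f mu inner_zero_right of_real_0
    using ii by algebra
  finally show ?thesis by simp
qed



lemma all_complex: "(\<forall>x y. P (Complex x y)) \<longleftrightarrow> (\<forall>w. P w)"
  by (metis complex.exhaust)

theorem proposition3p2:
  fixes H :: cmat2 and L :: "3 \<Rightarrow> cmat2"
  assumes "selfadjoint2 H" and "\<And>j. selfadjoint2 (L j)"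
  shows
    "(isothermic (diff_op (\<lambda>_. 0) (sde_diff L))
        \<longleftrightarrow> onb_up_to_const (Ldeltav L) (LRv L) (LIv L))
   \<and> (onb_up_to_const (Ldeltav L) (LRv L) (LIv L) \<longrightarrow>
        (\<exists>k::real. k > 0 \<and> (\<forall>S x y. diff_op (\<lambda>_. 0) (sde_diff L) S x y
            = k * (1 + x^2 + y^2)^2 * (px (px S) x y + py (py S) x y))))
   \<and> (H = 0 \<longrightarrow>
        ((isothermic (diff_op (sde_drift H L) (sde_diff L))
           \<longleftrightarrow> onb_up_to_const (Ldeltav L) (LRv L) (LIv L) \<and> L0v L = - L1v L)
       \<and> (onb_up_to_const (Ldeltav L) (LRv L) (LIv L) \<and> L0v L = - L1v L \<longrightarrow>
            diff_op (sde_drift H L) (sde_diff L) = diff_op (innov_drift H L) (sde_diff L))))"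
proof -
  note sa = assms(2)
  have onbG: "onb_up_to_const (Ldeltav L) (LRv L) (LIv L) \<longleftrightarrow> gram L"
    unfolding onb_iff gram_def ..
  have P1: "isothermic (diff_op (\<lambda>_. 0) (sde_diff L)) \<longleftrightarrow> gram L"
    using so_iff[OF sa] unfolding iso_char by simp
  have P2: "\<exists>k::real. k > 0 \<and> (\<forall>S x y. diff_op (\<lambda>_. 0) (sde_diff L) S x y
            = k * (1 + x^2 + y^2)^2 * (px (px S) x y + py (py S) x y))" if g: "gram L"
  proof (intro exI[of _ "inner (Ldeltav L) (Ldeltav L) / 2"] conjI allI)
    show "inner (Ldeltav L) (Ldeltav L) / 2 > 0" using g unfolding gram_def by simp
  next
    fix S x y
    show "diff_op (\<lambda>_. 0) (sde_diff L) S x y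
        = inner (Ldeltav L) (Ldeltav L) / 2 * (1 + x^2 + y^2)^2 * (px (px S) x y + py (py S) x y)"
      unfolding diff_op_exp cABC[OF sa] so_gram1[OF g] so_gram2[OF g] so_gram3[OF g]
      by (simp add: algebra_simps)
  qed
  have P3: "isothermic (diff_op (sde_drift 0 L) (sde_diff L)) \<longleftrightarrow> gram L \<and> L0v L = - L1v L"
  proof -
    have "isothermic (diff_op (sde_drift 0 L) (sde_diff L)) \<longleftrightarrow>
       (\<forall>w. sde_drift 0 L w = 0) \<and> (\<forall>x y. cB (sde_diff L) x y = 0 \<and> cA (sde_diff L) x y = cC (sde_diff L) x y
      \<and> cA (sde_diff L) x y > 0)"
      unfolding iso_char all_complex[of "\<lambda>w. sde_drift 0 L w = 0", symmetric] by blast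
    also have "\<dots> \<longleftrightarrow> (\<forall>w. sde_drift 0 L w = 0) \<and> gram L" unfolding so_iff[OF sa] ..
    also have "\<dots> \<longleftrightarrow> gram L \<and> L0v L = - L1v L"
      using drift_zero_iff[where L=L, OF sa] by blast
    finally show ?thesis .
  qed
  have P4: "diff_op (sde_drift 0 L) (sde_diff L) = diff_op (innov_drift 0 L) (sde_diff L)"
    if g: "gram L" and m: "L0v L = - L1v L"
  proof -
    have "muv L = 0" using m mu_iff by blast
    then have "sde_drift 0 L = innov_drift 0 L"
      unfolding innov_drift_def using innov_zero[OF sa g] by (intro ext) simp
    then show ?thesis by simp
  qed
  show ?thesis using P1 P2 P3 P4 onbG by auto
qed

end
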